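(* Let $G$ be a finite group and $H\le G$ a subgroup. If $H$ is mixable and the action of $G$ on the coset space $G/H$ (by left multiplication) is mixable, then $G$ is mixable and \[\mathrm{mixlen}(G)\le \mathrm{mixlen}(H)+\mathrm{mixlen}(G,G/H).\]
   Context: For a finite group $G$, a random subproduct is a random element $g_1^{\epsilon_1}\cdots g_k^{\epsilon_k}$ with $g_1,\dots,g_k\in G$ fixed and $\epsilon_1,\dots,\epsilon_k$ independent Bernoulli random variables, $\epsilon_i\sim\mathrm{Ber}(p_i)$, $p_i\in[0,1]$; $k$ is its length. $G$ is mixable if some random subproduct is exactly uniform on $G$, and $\mathrm{mixlen}(G)$ is the minimal length of such. For a transitive action of $G$ on a finite set $X$, the action is mixable if for some (equivalently every) $x_0\in X$ there is a random subproduct $\mathbf{g}$ with $\mathbf{g}x_0$ uniform on $X$; $\mathrm{mixlen}(G,X)$ is the minimal length of such a random subproduct. *)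

theory Defs
  imports "HOL-Algebra.Group" "HOL-Algebra.Coset" Complex_Main
begin

text \<open>A random subproduct of length k is given by a list gs of k group elements and a list
 ps of k probabilities.\<close>

definition sel_weight :: "real list \<Rightarrow> nat set \<Rightarrow> real" where
  "sel_weight ps S = (\<Prod>i<length ps. if i \<in> S then ps ! i else 1 - ps ! i)"

definition subprod :: "('a, 'b) monoid_scheme \<Rightarrow> 'a list \<Rightarrow> nat set \<Rightarrow> 'a" where
  "subprod G gs S =
     foldr (\<lambda>i acc. (if i \<in> S then gs ! i else \<one>\<^bsub>G\<^esub>) \<otimes>\<^bsub>G\<^esub> acc) [0..<length gs] \<one>\<^bsub>G\<^esub>"

definition valid_rsp :: "('a, 'b) monoid_scheme \<Rightarrow> 'a list \<Rightarrow> real list \<Rightarrow> bool" where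
  "valid_rsp G gs ps \<longleftrightarrow> set gs \<subseteq> carrier G \<and> length ps = length gs
     \<and> (\<forall>p\<in>set ps. 0 \<le> p \<and> p \<le> 1)"

definition rsp_prob :: "('a, 'b) monoid_scheme \<Rightarrow> 'a list \<Rightarrow> real list \<Rightarrow> ('a \<Rightarrow> bool) \<Rightarrow> real" where
  "rsp_prob G gs ps P =
     (\<Sum>S\<in>Pow {..<length gs}. if P (subprod G gs S) then sel_weight ps S else 0)"

definition mixes :: "('a, 'b) monoid_scheme \<Rightarrow> 'a list \<Rightarrow> real list \<Rightarrow> bool" where
  "mixes G gs ps \<longleftrightarrow> valid_rsp G gs ps \<and>
     (\<forall>x\<in>carrier G. rsp_prob G gs ps (\<lambda>g. g = x) = 1 / real (card (carrier G)))"

definition mixable :: "('a, 'b) monoid_scheme \<Rightarrow> bool" where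
  "mixable G \<longleftrightarrow> (\<exists>gs ps. mixes G gs ps)"

definition mixlen :: "('a, 'b) monoid_scheme \<Rightarrow> nat" where
  "mixlen G = (LEAST k. \<exists>gs ps. length gs = k \<and> mixes G gs ps)"

definition mixes_action :: "('a, 'b) monoid_scheme \<Rightarrow> ('a \<Rightarrow> 'c \<Rightarrow> 'c) \<Rightarrow> 'c set \<Rightarrow> 'c
    \<Rightarrow> 'a list \<Rightarrow> real list \<Rightarrow> bool" where
  "mixes_action G phi X x0 gs ps \<longleftrightarrow> valid_rsp G gs ps \<and>
     (\<forall>y\<in>X. rsp_prob G gs ps (\<lambda>g. phi g x0 = y) = 1 / real (card X))"

definition mixable_action :: "('a, 'b) monoid_scheme \<Rightarrow> ('a \<Rightarrow> 'c \<Rightarrow> 'c) \<Rightarrow> 'c set \<Rightarrow> bool" where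
  "mixable_action G phi X \<longleftrightarrow> (\<exists>x0\<in>X. \<exists>gs ps. mixes_action G phi X x0 gs ps)"

definition mixlen_action :: "('a, 'b) monoid_scheme \<Rightarrow> ('a \<Rightarrow> 'c \<Rightarrow> 'c) \<Rightarrow> 'c set \<Rightarrow> nat" where
  "mixlen_action G phi X =
     (LEAST k. \<exists>x0\<in>X. \<exists>gs ps. length gs = k \<and> mixes_action G phi X x0 gs ps)"

definition lcosets :: "('a, 'b) monoid_scheme \<Rightarrow> 'a set \<Rightarrow> 'a set set" where
  "lcosets G H = {g <#\<^bsub>G\<^esub> H | g. g \<in> carrier G}"

definition coset_action :: "('a, 'b) monoid_scheme \<Rightarrow> 'a \<Rightarrow> 'a set \<Rightarrow> 'a set" where
  "coset_action G g C = g <#\<^bsub>G\<^esub> C"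

end

theory Submission
  imports Defs
begin

definition Eexp :: "('a, 'b) monoid_scheme \<Rightarrow> 'a list \<Rightarrow> real list \<Rightarrow> ('a \<Rightarrow> real) \<Rightarrow> real" where
  "Eexp G gs ps f = (\<Sum>S\<in>Pow {..<length gs}. sel_weight ps S * f (subprod G gs S))"

lemma rsp_prob_Ex: "rsp_prob G gs ps P = Eexp G gs ps (\<lambda>g. if P g then 1 else 0)"
  unfolding rsp_prob_def Eexp_def by (intro sum.cong) auto

lemma (in monoid) foldr_closed:
  assumes "\<And>i. i \<in> set xs \<Longrightarrow> F i \<in> carrier G" "acc \<in> carrier G"
  shows "foldr (\<lambda>i a. F i \<otimes> a) xs acc \<in> carrier G"
  using assms by (induction xs) auto

lemma (in monoid) foldr_acc:
  assumes "\<And>i. i \<in> set xs \<Longrightarrow> F i \<in> carrier G" "acc \<in> carrier G"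
  shows "foldr (\<lambda>i a. F i \<otimes> a) xs acc = foldr (\<lambda>i a. F i \<otimes> a) xs \<one> \<otimes> acc"
  using assms
proof (induction xs)
  case Nil then show ?case by simp
next
  case (Cons x xs)
  have c: "foldr (\<lambda>i a. F i \<otimes> a) xs \<one> \<in> carrier G"
    using Cons.prems by (intro foldr_closed) auto
  show ?case using Cons c by (simp add: m_assoc)
qed

lemma (in monoid) subprod_closed:
  assumes "set gs \<subseteq> carrier G"
  shows "subprod G gs S \<in> carrier G"
  unfolding subprod_def using assms by (intro foldr_closed) auto

lemma (in monoid) subprod_append:
  assumes "set gs1 \<subseteq> carrier G" "set gs2 \<subseteq> carrier G" "A \<subseteq> {..<length gs1}"
  shows "subprod G (gs1 @ gs2) (A \<union> (\<lambda>j. j + length gs1) ` B)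
       = subprod G gs1 A \<otimes> subprod G gs2 B"
proof -
  let ?n = "length gs1" and ?m = "length gs2"
  let ?S = "A \<union> (\<lambda>j. j + length gs1) ` B"
  define F where "F = (\<lambda>i. if i \<in> ?S then (gs1 @ gs2) ! i else \<one>)"
  have Fc: "F i \<in> carrier G" if "i < ?n + ?m" for i
    using that assms unfolding F_def by (auto simp: nth_append)
  have "[0..<length (gs1 @ gs2)] = [0..<?n] @ [?n..<?n + ?m]"
    unfolding length_append by (rule upt_add_eq_append) simp
  then have "subprod G (gs1 @ gs2) ?S = foldr (\<lambda>i a. F i \<otimes> a) [0..<?n] (foldr (\<lambda>i a. F i \<otimes> a) [?n..<?n + ?m] \<one>)"
    unfolding subprod_def F_def by simp
  also have "\<dots> = foldr (\<lambda>i a. F i \<otimes> a) [0..<?n] \<one> \<otimes> foldr (\<lambda>i a. F i \<otimes> a) [?n..<?n + ?m] \<one>"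
    by (rule foldr_acc) (auto intro!: Fc foldr_closed)
  also have "foldr (\<lambda>i a. F i \<otimes> a) [0..<?n] \<one> = subprod G gs1 A"
    unfolding subprod_def F_def using assms(3)
    by (intro foldr_cong) (auto simp: nth_append)
  also have "[?n..<?n + ?m] = map (\<lambda>j. j + ?n) [0..<?m]"
    by (simp add: map_add_upt add.commute)
  also have "foldr (\<lambda>i a. F i \<otimes> a) (map (\<lambda>j. j + ?n) [0..<?m]) \<one> = subprod G gs2 B"
    unfolding subprod_def F_def foldr_map using assms(3)
    by (intro foldr_cong) (auto simp: nth_append)
  finally show ?thesis .
qed

lemma sel_weight_append:
  assumes "length ps1 = n" "A \<subseteq> {..<n}"
  shows "sel_weight (ps1 @ ps2) (A \<union> (\<lambda>j. j + n) ` B) = sel_weight ps1 A * sel_weight ps2 B"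
proof -
  let ?m = "length ps2"
  let ?S = "A \<union> (\<lambda>j. j + n) ` B"
  define F where "F = (\<lambda>i. if i \<in> ?S then (ps1 @ ps2) ! i else 1 - (ps1 @ ps2) ! i)"
  have e: "{..<n + ?m} = {..<n} \<union> {n..<n + ?m}" by auto
  have "sel_weight (ps1 @ ps2) ?S = prod F {..<n + ?m}"
    unfolding sel_weight_def F_def using assms(1) by simp
  also have "\<dots> = prod F {..<n} * prod F {n..<n + ?m}"
    unfolding e by (rule prod.union_disjoint) auto
  also have "prod F {..<n} = sel_weight ps1 A"
    unfolding sel_weight_def F_def using assms by (intro prod.cong) (auto simp: nth_append)
  also have "prod F {n..<n + ?m} = prod F {0 + n..<?m + n}" by (simp add: add.commute)
  also have "\<dots> = (\<Prod>i = 0..<?m. F (i + n))" by (rule prod.shift_bounds_nat_ivl)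
  also have "\<dots> = sel_weight ps2 B"
    unfolding sel_weight_def F_def using assms by (intro prod.cong) (auto simp: nth_append)
  finally show ?thesis .
qed

lemma phi_inv:
  fixes n :: nat
  assumes "A \<subseteq> {..<n}"
  shows "(A \<union> (\<lambda>j. j + n) ` B) \<inter> {..<n} = A" "{j. j + n \<in> A \<union> (\<lambda>j. j + n) ` B} = B"
proof -
  show "(A \<union> (\<lambda>j. j + n) ` B) \<inter> {..<n} = A"
  proof -
    have "(\<lambda>j. j + n) ` B \<inter> {..<n} = {}" by auto
    then show ?thesis using assms by blast
  qed
  have h: "\<forall>j. j + n \<notin> A" using assms by auto
  then show "{j. j + n \<in> A \<union> (\<lambda>j. j + n) ` B} = B" by auto
qed

lemma (in monoid) Eexp_append:
  assumes "set gs1 \<subseteq> carrier G" "set gs2 \<subseteq> carrier G"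
    "length ps1 = length gs1" "length ps2 = length gs2"
  shows "Eexp G (gs1 @ gs2) (ps1 @ ps2) f = Eexp G gs1 ps1 (\<lambda>a. Eexp G gs2 ps2 (\<lambda>b. f (a \<otimes> b)))"
proof -
  define n where "n = length gs1"
  define m where "m = length gs2"
  define \<phi> where "\<phi> = (\<lambda>(A, B). A \<union> (\<lambda>j. j + n) ` (B :: nat set))"
  have img: "Pow {..<length (gs1 @ gs2)} = \<phi> ` (Pow {..<n} \<times> Pow {..<m})"
  proof
    show "\<phi> ` (Pow {..<n} \<times> Pow {..<m}) \<subseteq> Pow {..<length (gs1 @ gs2)}"
      by (auto simp: \<phi>_def n_def m_def)
    show "Pow {..<length (gs1 @ gs2)} \<subseteq> \<phi> ` (Pow {..<n} \<times> Pow {..<m})"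
    proof
      fix S assume S: "S \<in> Pow {..<length (gs1 @ gs2)}"
      have 0: "S = S \<inter> {..<n} \<union> (\<lambda>j. j + n) ` {j. j + n \<in> S}"
      proof (intro equalityI subsetI)
        fix x assume x: "x \<in> S"
        show "x \<in> S \<inter> {..<n} \<union> (\<lambda>j. j + n) ` {j. j + n \<in> S}"
        proof (cases "x < n")
          case True thus ?thesis using x by simp
        next
          case False then have "x = (x - n) + n" by simp
          thus ?thesis using x by (metis (mono_tags) UnI2 image_eqI mem_Collect_eq)
        qed
      qed auto
      then have 1: "S = \<phi> (S \<inter> {..<n}, {j. j + n \<in> S})" by (simp add: \<phi>_def)
      have 2: "(S \<inter> {..<n}, {j. j + n \<in> S}) \<in> Pow {..<n} \<times> Pow {..<m}"
        using S by (auto simp: n_def m_def)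
      from 1 2 show "S \<in> \<phi> ` (Pow {..<n} \<times> Pow {..<m})" by (metis image_eqI)
    qed
  qed
  have inj: "inj_on \<phi> (Pow {..<n} \<times> Pow {..<m})"
  proof (rule inj_onI)
    fix p q assume p: "p \<in> Pow {..<n} \<times> Pow {..<m}" and q: "q \<in> Pow {..<n} \<times> Pow {..<m}"
      and e: "\<phi> p = \<phi> q"
    obtain A B where pAB: "p = (A, B)" by (cases p)
    obtain A' B' where qAB: "q = (A', B')" by (cases q)
    have A: "A \<subseteq> {..<n}" "A' \<subseteq> {..<n}" using p q pAB qAB by auto
    have e': "A \<union> (\<lambda>j. j + n) ` B = A' \<union> (\<lambda>j. j + n) ` B'" using e by (simp add: pAB qAB \<phi>_def)
    have "A = A'" using phi_inv(1)[OF A(1), of B] phi_inv(1)[OF A(2), of B'] e' by metis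
    moreover have "B = B'" using phi_inv(2)[OF A(1), of B] phi_inv(2)[OF A(2), of B'] e' by metis
    ultimately show "p = q" by (simp add: pAB qAB)
  qed
  have "Eexp G (gs1 @ gs2) (ps1 @ ps2) f
      = (\<Sum>p\<in>Pow {..<n} \<times> Pow {..<m}. sel_weight (ps1 @ ps2) (\<phi> p) * f (subprod G (gs1 @ gs2) (\<phi> p)))"
    unfolding Eexp_def img by (simp add: sum.reindex[OF inj])
  also have "\<dots> = (\<Sum>(A, B)\<in>Pow {..<n} \<times> Pow {..<m}.
       sel_weight ps1 A * (sel_weight ps2 B * f (subprod G gs1 A \<otimes> subprod G gs2 B)))"
  proof (rule sum.cong[OF refl])
    fix p assume p: "p \<in> Pow {..<n} \<times> Pow {..<m}"
    obtain A B where pAB: "p = (A, B)" by (cases p)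
    have A: "A \<subseteq> {..<length gs1}" using p pAB n_def by auto
    have w: "sel_weight (ps1 @ ps2) (\<phi> (A, B)) = sel_weight ps1 A * sel_weight ps2 B"
      unfolding \<phi>_def prod.case n_def by (rule sel_weight_append) (use A assms(3) in auto)
    have sp: "subprod G (gs1 @ gs2) (\<phi> (A, B)) = subprod G gs1 A \<otimes> subprod G gs2 B"
      unfolding \<phi>_def prod.case n_def by (rule subprod_append[OF assms(1,2) A])
    show "sel_weight (ps1 @ ps2) (\<phi> p) * f (subprod G (gs1 @ gs2) (\<phi> p)) =
       (case p of (A, B) \<Rightarrow> sel_weight ps1 A * (sel_weight ps2 B * f (subprod G gs1 A \<otimes> subprod G gs2 B)))"
      unfolding pAB w sp prod.case by (simp only: mult.assoc)
  qed
  also have "\<dots> = (\<Sum>A\<in>Pow {..<n}. \<Sum>B\<in>Pow {..<m}.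
       sel_weight ps1 A * (sel_weight ps2 B * f (subprod G gs1 A \<otimes> subprod G gs2 B)))"
    by (rule sum.cartesian_product[symmetric])
  also have "\<dots> = Eexp G gs1 ps1 (\<lambda>a. Eexp G gs2 ps2 (\<lambda>b. f (a \<otimes> b)))"
    unfolding Eexp_def n_def m_def by (simp add: sum_distrib_left)
  finally show ?thesis .
qed

lemma (in group) subprod_conj:
  assumes "set gs \<subseteq> carrier G" "c \<in> carrier G"
  shows "subprod G (map (\<lambda>y. c \<otimes> y \<otimes> inv c) gs) S = c \<otimes> subprod G gs S \<otimes> inv c"
proof -
  have "foldr (\<lambda>i a. (if i \<in> S then map (\<lambda>y. c \<otimes> y \<otimes> inv c) gs ! i else \<one>) \<otimes> a) xs \<one>
      = c \<otimes> foldr (\<lambda>i a. (if i \<in> S then gs ! i else \<one>) \<otimes> a) xs \<one> \<otimes> inv c"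
    if "set xs \<subseteq> {..<length gs}" for xs
    using that
  proof (induction xs)
    case Nil then show ?case using assms by simp
  next
    case (Cons x xs)
    let ?R = "foldr (\<lambda>i a. (if i \<in> S then gs ! i else \<one>) \<otimes> a) xs \<one>"
    have R: "?R \<in> carrier G" using Cons.prems assms(1)
      by (intro foldr_closed) (auto dest: nth_mem)
    have x: "gs ! x \<in> carrier G" using Cons.prems assms(1) by (auto dest: nth_mem)
    show ?case using Cons R x assms(2) by (auto simp: m_assoc) (simp add: m_assoc[symmetric])
  qed
  from this[of "[0..<length gs]"] show ?thesis unfolding subprod_def by (simp add: atLeast0LessThan)
qed

lemma sel_weight_sum:
  assumes "\<forall>p\<in>set ps. 0 \<le> p \<and> p \<le> 1"
  shows "(\<Sum>S\<in>Pow {..<length ps}. sel_weight ps S) = 1"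
  using assms
proof (induction ps rule: rev_induct)
  case Nil then show ?case by (simp add: sel_weight_def)
next
  case (snoc p ps)
  let ?n = "length ps"
  have w: "sel_weight (ps @ [p]) S = sel_weight ps (S - {?n}) * (if ?n \<in> S then p else 1 - p)"
    if "S \<subseteq> {..<Suc ?n}" for S
  proof -
    have "(\<Prod>i<?n. if i \<in> S then (ps @ [p]) ! i else 1 - (ps @ [p]) ! i)
        = (\<Prod>i<?n. if i \<in> S - {?n} then ps ! i else 1 - ps ! i)"
      by (intro prod.cong) (auto simp: nth_append)
    then show ?thesis by (simp add: sel_weight_def)
  qed
  have dn: "S - {?n} = S" if "S \<subseteq> {..<?n}" for S using that by auto
  have P: "Pow {..<Suc ?n} = Pow {..<?n} \<union> insert ?n ` Pow {..<?n}"
    by (simp add: lessThan_Suc Pow_insert)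
  have "(\<Sum>S\<in>Pow {..<length (ps @ [p])}. sel_weight (ps @ [p]) S)
     = (\<Sum>S\<in>Pow {..<?n}. sel_weight (ps @ [p]) S) + (\<Sum>S\<in>insert ?n ` Pow {..<?n}. sel_weight (ps @ [p]) S)"
    unfolding length_append_singleton P by (rule sum.union_disjoint) auto
  also have "(\<Sum>S\<in>insert ?n ` Pow {..<?n}. sel_weight (ps @ [p]) S)
      = (\<Sum>S\<in>Pow {..<?n}. sel_weight (ps @ [p]) (insert ?n S))"
  proof (rule sum.reindex_cong)
    show "inj_on (insert ?n) (Pow {..<?n})"
    proof (rule inj_onI)
      fix x y assume "x \<in> Pow {..<?n}" "y \<in> Pow {..<?n}" "insert ?n x = insert ?n y"
      then show "x = y" by (metis Diff_insert_absorb PowD lessThan_iff less_irrefl subsetD)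
    qed
  qed auto
  also have "(\<Sum>S\<in>Pow {..<?n}. sel_weight (ps @ [p]) (insert ?n S)) = (\<Sum>S\<in>Pow {..<?n}. sel_weight ps S * p)"
    by (intro sum.cong refl) (subst w; auto simp: dn)
  also have "(\<Sum>S\<in>Pow {..<?n}. sel_weight (ps @ [p]) S) = (\<Sum>S\<in>Pow {..<?n}. sel_weight ps S * (1 - p))"
    by (intro sum.cong refl) (subst w; auto simp: dn)
  finally show ?case using snoc by (simp add: sum_distrib_right[symmetric])
qed

lemma (in group) lcoset_eq_iff:
  assumes sub: "subgroup H G" and u: "u \<in> carrier G" and v: "v \<in> carrier G"
  shows "(u <# H = v <# H) \<longleftrightarrow> inv u \<otimes> v \<in> H"
proof
  assume e: "u <# H = v <# H"
  have "v \<in> v <# H" using v subgroup.one_closed[OF sub] unfolding l_coset_def by force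
  then have "v \<in> u <# H" using e by simp
  then obtain h where h: "h \<in> H" "v = u \<otimes> h" unfolding l_coset_def by auto
  have hc: "h \<in> carrier G" using h(1) sub subgroup.subset by blast
  have "inv u \<otimes> v = h" using h(2) u hc by (simp add: m_assoc[symmetric])
  then show "inv u \<otimes> v \<in> H" using h(1) by simp
next
  assume "inv u \<otimes> v \<in> H"
  then have "v \<in> u <# H" using subgroup.lcos_module_rev[OF sub is_group u v] by blast
  then show "u <# H = v <# H" using l_repr_independence[OF _ u sub] by blast
qed

lemma one_update: "\<one>\<^bsub>G\<lparr>carrier := H\<rparr>\<^esub> = \<one>\<^bsub>G\<^esub>"
  by simp

lemma mult_update: "mult (G\<lparr>carrier := H\<rparr>) = mult G"
  by simp

lemma subprod_update: "subprod (G\<lparr>carrier := H\<rparr>) gs S = subprod G gs S"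
  unfolding subprod_def one_update mult_update ..

lemma rsp_prob_update: "rsp_prob (G\<lparr>carrier := H\<rparr>) gs ps P = rsp_prob G gs ps P"
  unfolding rsp_prob_def subprod_update by simp

lemma Eexp_cong:
  assumes "\<And>S. f (subprod G gs S) = g (subprod G gs S)"
  shows "Eexp G gs ps f = Eexp G gs ps g"
  unfolding Eexp_def using assms by simp

lemma Eexp_cmult: "Eexp G gs ps (\<lambda>a. k * f a) = k * Eexp G gs ps f"
  unfolding Eexp_def by (simp add: sum_distrib_left mult.left_commute)

lemma (in monoid) rsp_total:
  assumes "valid_rsp G gs ps" "finite (carrier G)"
  shows "(\<Sum>x\<in>carrier G. rsp_prob G gs ps (\<lambda>g. g = x)) = 1"
proof -
  have "(\<Sum>x\<in>carrier G. rsp_prob G gs ps (\<lambda>g. g = x))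
      = (\<Sum>S\<in>Pow {..<length gs}. \<Sum>x\<in>carrier G. if subprod G gs S = x then sel_weight ps S else 0)"
    unfolding rsp_prob_def by (rule sum.swap)
  also have "\<dots> = (\<Sum>S\<in>Pow {..<length gs}. sel_weight ps S)"
  proof (rule sum.cong[OF refl])
    fix S
    have "subprod G gs S \<in> carrier G" using assms(1) by (intro subprod_closed) (simp add: valid_rsp_def)
    then show "(\<Sum>x\<in>carrier G. if subprod G gs S = x then sel_weight ps S else 0) = sel_weight ps S"
      using assms(2) by simp
  qed
  also have "\<dots> = 1" using assms(1) sel_weight_sum[of ps] by (simp add: valid_rsp_def)
  finally show ?thesis .
qed

lemma (in monoid) const_uniform:
  assumes "valid_rsp G gs ps" "finite (carrier G)"
    and "\<And>x. x \<in> carrier G \<Longrightarrow> rsp_prob G gs ps (\<lambda>g. g = x) = Q"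
  shows "Q = 1 / real (card (carrier G))"
proof -
  have e: "real (card (carrier G)) * Q = 1"
    using rsp_total[OF assms(1,2)] assms(3) by simp
  have "real (card (carrier G)) \<noteq> 0"
  proof
    assume "real (card (carrier G)) = 0"
    with e show False by simp
  qed
  with e show ?thesis by (metis eq_divide_eq mult.commute)
qed

lemma (in group) main_aux:
  assumes "finite (carrier G)" and "subgroup H G"
    and "mixable (G\<lparr>carrier := H\<rparr>)"
    and "mixable_action G (coset_action G) (lcosets G H)"
  shows "mixable G \<and>
    mixlen G \<le> mixlen (G\<lparr>carrier := H\<rparr>) + mixlen_action G (coset_action G) (lcosets G H)"
proof -
  let ?GH = "G\<lparr>carrier := H\<rparr>"
  let ?X = "lcosets G H"
  have Hsub: "H \<subseteq> carrier G" using assms(2) subgroup.subset by blast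
  have ex1: "\<exists>k gs ps. length gs = k \<and> mixes ?GH gs ps" using assms(3) unfolding mixable_def by blast
  obtain gsH psH where lenH: "length gsH = mixlen ?GH" and mH: "mixes ?GH gsH psH"
    using LeastI_ex[OF ex1] unfolding mixlen_def by blast
  have ex2: "\<exists>k. \<exists>x0\<in>?X. \<exists>gs ps. length gs = k \<and> mixes_action G (coset_action G) ?X x0 gs ps"
    using assms(4) unfolding mixable_action_def by blast
  obtain x0 gsA psA where x0: "x0 \<in> ?X" and lenA: "length gsA = mixlen_action G (coset_action G) ?X"
    and mA: "mixes_action G (coset_action G) ?X x0 gsA psA"
    using LeastI_ex[OF ex2] unfolding mixlen_action_def by blast
  obtain c where c: "c \<in> carrier G" and x0c: "x0 = c <# H" using x0 unfolding lcosets_def by blast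
  have vH: "set gsH \<subseteq> H" "length psH = length gsH" "\<forall>p\<in>set psH. 0 \<le> p \<and> p \<le> 1"
    using mH unfolding mixes_def valid_rsp_def by auto
  have probH: "rsp_prob G gsH psH (\<lambda>g. g = y) = 1 / real (card H)" if "y \<in> H" for y
    using mH that unfolding mixes_def rsp_prob_update by simp
  have vA: "set gsA \<subseteq> carrier G" "length psA = length gsA" "\<forall>p\<in>set psA. 0 \<le> p \<and> p \<le> 1"
    using mA unfolding mixes_action_def valid_rsp_def by auto
  have probA: "rsp_prob G gsA psA (\<lambda>g. coset_action G g x0 = y) = 1 / real (card ?X)" if "y \<in> ?X" for y
    using mA that unfolding mixes_action_def by simp
  define gsH' where "gsH' = map (\<lambda>y. c \<otimes> y \<otimes> inv c) gsH"
  define gs where "gs = gsA @ gsH'"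
  define ps where "ps = psA @ psH"
  have gsHc: "set gsH \<subseteq> carrier G" using vH(1) Hsub by blast
  have gsH'c: "set gsH' \<subseteq> carrier G" using gsHc c unfolding gsH'_def by auto
  have valid: "valid_rsp G gs ps"
    unfolding valid_rsp_def gs_def ps_def using vA vH gsH'c by (auto simp: gsH'_def)
  have subH: "subprod G gsH S \<in> H" for S
  proof -
    have "subprod ?GH gsH S \<in> carrier ?GH"
      using vH(1) group.is_monoid[OF subgroup.subgroup_is_group[OF assms(2) is_group]]
      by (intro monoid.subprod_closed) auto
    then show ?thesis by (simp add: subprod_update)
  qed
  define Q where "Q = 1 / real (card H) * (1 / real (card ?X))"
  have probx: "rsp_prob G gs ps (\<lambda>g. g = x) = Q" if x: "x \<in> carrier G" for x
  proof -
    have inner: "Eexp G gsH' psH (\<lambda>b. if a \<otimes> b = x then 1 else 0)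
        = 1 / real (card H) * (if coset_action G a x0 = (x \<otimes> c) <# H then 1 else 0)"
      if a: "a \<in> carrier G" for a
    proof -
      define y where "y = inv c \<otimes> (inv a \<otimes> x \<otimes> c)"
      have eq: "(a \<otimes> (c \<otimes> h \<otimes> inv c) = x) \<longleftrightarrow> h = y" if h: "h \<in> carrier G" for h
      proof -
        have "(a \<otimes> (c \<otimes> h \<otimes> inv c) = x) \<longleftrightarrow> c \<otimes> h \<otimes> inv c = inv a \<otimes> x"
          using inv_solve_left[of "c \<otimes> h \<otimes> inv c" a x] a c h x by auto
        also have "\<dots> \<longleftrightarrow> c \<otimes> h = inv a \<otimes> x \<otimes> c"
          using inv_solve_right'[of "inv a \<otimes> x" "c \<otimes> h" c] a c h x by auto
        also have "\<dots> \<longleftrightarrow> h = y"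
          using inv_solve_left[of h c "inv a \<otimes> x \<otimes> c"] a c h x unfolding y_def by auto
        finally show ?thesis .
      qed
      have "Eexp G gsH' psH (\<lambda>b. if a \<otimes> b = x then 1 else 0)
          = Eexp G gsH psH (\<lambda>h. if h = y then 1 else 0)"
        unfolding Eexp_def gsH'_def length_map subprod_conj[OF gsHc c]
        using subprod_closed[OF gsHc] eq by simp
      also have "\<dots> = rsp_prob G gsH psH (\<lambda>h. h = y)" by (simp add: rsp_prob_Ex)
      also have "\<dots> = (if y \<in> H then 1 / real (card H) else 0)"
      proof (cases "y \<in> H")
        case True then show ?thesis using probH by simp
      next
        case False
        then have "\<And>S. subprod G gsH S \<noteq> y" using subH by metis
        then show ?thesis using False by (simp add: rsp_prob_def)
      qed
      also have "(y \<in> H) \<longleftrightarrow> coset_action G a x0 = (x \<otimes> c) <# H"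
      proof -
        have "coset_action G a x0 = (a \<otimes> c) <# H"
          unfolding coset_action_def x0c using lcos_m_assoc[OF Hsub a c] by simp
        moreover have "((a \<otimes> c) <# H = (x \<otimes> c) <# H) \<longleftrightarrow> inv (a \<otimes> c) \<otimes> (x \<otimes> c) \<in> H"
          using lcoset_eq_iff[OF assms(2)] a c x by simp
        moreover have "inv (a \<otimes> c) \<otimes> (x \<otimes> c) = y"
          using a c x by (simp add: y_def inv_mult_group m_assoc)
        ultimately show ?thesis by simp
      qed
      finally show ?thesis by simp
    qed
    have "rsp_prob G gs ps (\<lambda>g. g = x) = Eexp G gsA psA (\<lambda>a. Eexp G gsH' psH (\<lambda>b. if a \<otimes> b = x then 1 else 0))"
      unfolding rsp_prob_Ex gs_def ps_def
      by (rule Eexp_append) (use vA vH gsH'c in \<open>auto simp: gsH'_def\<close>)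
    also have "\<dots> = Eexp G gsA psA (\<lambda>a. 1 / real (card H) * (if coset_action G a x0 = (x \<otimes> c) <# H then 1 else 0))"
      by (rule Eexp_cong) (rule inner[OF subprod_closed[OF vA(1)]])
    also have "\<dots> = 1 / real (card H) * rsp_prob G gsA psA (\<lambda>a. coset_action G a x0 = (x \<otimes> c) <# H)"
      unfolding rsp_prob_Ex by (rule Eexp_cmult)
    also have "\<dots> = Q"
    proof -
      have "(x \<otimes> c) <# H \<in> ?X" unfolding lcosets_def using x c by blast
      then show ?thesis using probA Q_def by simp
    qed
    finally show ?thesis .
  qed
  have "Q = 1 / real (card (carrier G))"
    by (rule const_uniform[OF valid assms(1) probx])
  then have mG: "mixes G gs ps" unfolding mixes_def using valid probx by simp
  have "mixlen G \<le> length gs"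
    unfolding mixlen_def using mG by (intro Least_le) blast
  moreover have "length gs = mixlen ?GH + mixlen_action G (coset_action G) ?X"
    unfolding gs_def gsH'_def using lenH lenA by simp
  ultimately show ?thesis using mG unfolding mixable_def by auto
qed

theorem mainTheorem10:
  fixes G :: "('a, 'b) monoid_scheme" and H :: "'a set"
  assumes "group G" and "finite (carrier G)" and "subgroup H G"
    and "mixable (G\<lparr>carrier := H\<rparr>)"
    and "mixable_action G (coset_action G) (lcosets G H)"
  shows "mixable G \<and>
    mixlen G \<le> mixlen (G\<lparr>carrier := H\<rparr>) + mixlen_action G (coset_action G) (lcosets G H)"
  using group.main_aux[OF assms] .

end
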